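(* For every finite simple graph $G$, one has $\mathfrak a(G)=-M(G)$, where $M(G)$ is the multiplicity of $-1$ as a root of the independence polynomial $P_G(x)$ (zero if $P_G(-1)\neq 0$). In particular, $\mathfrak a(G)=0$ if and only if $P_G(-1)\neq 0$.
   Context: Let $G$ be a finite simple graph on vertex set $[N]$, $K$ a field, $S=K[x_1,\dots,x_N]$, and $I(G)\subset S$ the edge ideal generated by $x_ix_j$ for $\{i,j\}\in E(G)$. Let $\alpha(G)$ be the independence number of $G$ (which equals $\dim S/I(G)$). The Hilbert series of $S/I(G)$ is written uniquely as $h_G(t)/(1-t)^{\alpha(G)}$ with $h_G(t)\in\mathbb Z[t]$ a polynomial whose leading coefficient is nonzero (the $h$-polynomial). The $\mathfrak a$-invariant is $\mathfrak a(G)=\deg h_G(t)-\alpha(G)$. The independence polynomial is $P_G(x)=\sum_i g_ix^i$, where $g_i$ is the number of independent sets of size $i$. *)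

theory Defs
  imports "HOL-Computational_Algebra.Computational_Algebra"
begin

definition simple_graph :: "nat \<Rightarrow> nat set set \<Rightarrow> bool" where
  "simple_graph N E \<longleftrightarrow> (\<forall>e\<in>E. card e = 2 \<and> e \<subseteq> {1..N})"

definition independent :: "nat \<Rightarrow> nat set set \<Rightarrow> nat set \<Rightarrow> bool" where
  "independent N E S \<longleftrightarrow> S \<subseteq> {1..N} \<and> (\<forall>e\<in>E. \<not> e \<subseteq> S)"

definition indep_number :: "nat \<Rightarrow> nat set set \<Rightarrow> nat" where
  "indep_number N E = Max (card ` {S. independent N E S})"

definition indep_poly :: "nat \<Rightarrow> nat set set \<Rightarrow> int poly" where
  "indep_poly N E = (\<Sum>i\<le>N. monom (int (card {S. independent N E S \<and> card S = i})) i)"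

text \<open>Monomials x^a of S = K[x_1..x_N] (exponent vectors supported on {1..N}) of degree d
  that do not lie in the edge ideal I(G), i.e. are divisible by no x_i x_j with {i,j} in E.
  They form a K-basis of (S/I(G))_d.\<close>
definition standard_monomials :: "nat \<Rightarrow> nat set set \<Rightarrow> nat \<Rightarrow> (nat \<Rightarrow> nat) set" where
  "standard_monomials N E d = {a. (\<forall>i. i \<notin> {1..N} \<longrightarrow> a i = 0) \<and> (\<Sum>i\<in>{1..N}. a i) = d
      \<and> (\<forall>e\<in>E. \<not> (\<forall>i\<in>e. 0 < a i))}"

definition hilbert_fun :: "nat \<Rightarrow> nat set set \<Rightarrow> nat \<Rightarrow> nat" where
  "hilbert_fun N E d = card (standard_monomials N E d)"

definition hilbert_series :: "nat \<Rightarrow> nat set set \<Rightarrow> int fps" where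
  "hilbert_series N E = Abs_fps (\<lambda>d. int (hilbert_fun N E d))"

definition h_poly :: "nat \<Rightarrow> nat set set \<Rightarrow> int poly" where
  "h_poly N E = (THE h. fps_of_poly h = hilbert_series N E * (1 - fps_X) ^ indep_number N E)"

definition a_invariant :: "nat \<Rightarrow> nat set set \<Rightarrow> int" where
  "a_invariant N E = int (degree (h_poly N E)) - int (indep_number N E)"

end

theory Submission
  imports Defs
begin

definition Tr :: "nat \<Rightarrow> int poly \<Rightarrow> int poly" where
  "Tr n p = (\<Sum>i\<le>n. smult (coeff p i) ([:0,1:]^i * [:1,-1:]^(n-i)))"

lemma Tr_add: "Tr n (p + q) = Tr n p + Tr n q"
  by (simp add: Tr_def smult_add_left sum.distrib)

lemma Tr_shift:
  assumes "degree q \<le> n"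
  shows "Tr (Suc n) (q + pCons 0 q) = Tr n q"
proof -
  let ?x = "[:0,1::int:]" and ?y = "[:1,-1::int:]"
  have c: "coeff q (Suc n) = 0" using assms by (simp add: coeff_eq_0)
  have A: "Tr (Suc n) q = (\<Sum>i\<le>n. smult (coeff q i) (?x^i * ?y^(n-i) * ?y))"
    unfolding Tr_def sum.atMost_Suc c smult_0_left add_0_right
    by (intro sum.cong refl) (simp only: Suc_diff_le atMost_iff power_Suc2 mult.assoc)
  have B: "Tr (Suc n) (pCons 0 q) = (\<Sum>i\<le>n. smult (coeff q i) (?x^i * ?y^(n-i) * ?x))"
    unfolding Tr_def sum.atMost_Suc_shift coeff_pCons_0 smult_0_left add_0_left
    by (intro sum.cong refl) (simp only: coeff_pCons_Suc diff_Suc_Suc power_Suc mult_ac)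
  have "Tr (Suc n) (q + pCons 0 q) = (\<Sum>i\<le>n. smult (coeff q i) (?x^i * ?y^(n-i) * (?y + ?x)))"
    unfolding Tr_add A B sum.distrib[symmetric] smult_add_right[symmetric] distrib_left[symmetric]
    by (rule refl)
  also have "?y + ?x = 1" by (simp add: one_pCons)
  finally show ?thesis by (simp add: Tr_def)
qed

lemma Tr_pow:
  assumes "degree q + k \<le> n"
  shows "Tr n ([:1,1:]^k * q) = Tr (n-k) q"
  using assms
proof (induction k arbitrary: n)
  case 0 then show ?case by simp
next
  case (Suc k)
  then obtain n' where n: "n = Suc n'" by (cases n) auto
  define r where "r = [:1,1:]^k * q"
  have dr: "degree r \<le> n'"
  proof -
    have "degree r \<le> degree ([:1,1::int:]^k) + degree q" unfolding r_def by (rule degree_mult_le)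
    also have "degree ([:1,1::int:]^k) \<le> degree [:1,1::int:] * k" by (rule degree_power_le)
    finally show ?thesis using Suc.prems n by simp
  qed
  have "[:1,1:]^Suc k * q = r + pCons 0 r" unfolding r_def
    by (simp add: mult.assoc) (simp add: one_pCons[symmetric] algebra_simps)
  then have "Tr n ([:1,1:]^Suc k * q) = Tr n' r" using n Tr_shift[OF dr] by simp
  also have "\<dots> = Tr (n'-k) q" unfolding r_def using Suc.IH[of n'] Suc.prems n by simp
  finally show ?case using n by simp
qed

lemma Tr_deg:
  assumes "degree p \<le> n" "poly p (-1) \<noteq> 0"
  shows "degree (Tr n p) = n"
proof -
  let ?x = "[:0,1::int:]" and ?y = "[:1,-1::int:]"
  have dt: "degree (?x^i * ?y^(n-i)) = n" if "i \<le> n" for i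
    using that by (simp add: degree_mult_eq degree_power_eq)
  have le: "degree (Tr n p) \<le> n" unfolding Tr_def
    by (rule degree_sum_le) (auto intro: order_trans[OF degree_smult_le] simp: dt)
  have ct: "coeff (?x^i * ?y^(n-i)) n = (-1)^(n-i)" if "i \<le> n" for i
  proof -
    have "coeff (?x^i * ?y^(n-i)) n = lead_coeff (?x^i * ?y^(n-i))" using dt[OF that] by simp
    also have "\<dots> = (-1)^(n-i)" by (simp add: lead_coeff_mult lead_coeff_power)
    finally show ?thesis .
  qed
  have "coeff (Tr n p) n = (\<Sum>i\<le>n. coeff p i * (-1)^(n-i))"
    unfolding Tr_def coeff_sum coeff_smult by (intro sum.cong refl) (simp add: ct)
  also have "\<dots> = (\<Sum>i\<le>n. (-1)^n * (coeff p i * (-1)^i))"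
  proof (intro sum.cong refl)
    fix i assume "i \<in> {..n}"
    then have "(-1::int)^n = (-1)^(n-i) * (-1)^i" by (simp add: power_add[symmetric])
    moreover have e: "(-1::int)^i * (-1)^i = 1" by (simp add: power_mult_distrib[symmetric])
    ultimately have "(-1::int)^n * (-1)^i = (-1)^(n-i)"
      by (metis mult.assoc mult.right_neutral)
    then show "coeff p i * (-1)^(n-i) = (-1)^n * (coeff p i * (-1)^i)" by (metis mult.left_commute)
  qed
  also have "\<dots> = (-1)^n * poly p (-1)"
  proof -
    have "poly p (-1) = (\<Sum>i\<le>n. coeff p i * (-1)^i)"
      unfolding poly_altdef using assms(1)
      by (intro sum.mono_neutral_left) (auto simp: coeff_eq_0)
    then show ?thesis by (simp add: sum_distrib_left)
  qed
  finally have "coeff (Tr n p) n \<noteq> 0" using assms(2) by simp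
  then have "n \<le> degree (Tr n p)" by (rule le_degree)
  with le show ?thesis by simp
qed

lemma Tr_degree:
  assumes "p \<noteq> 0" "degree p \<le> n"
  shows "degree (Tr n p) = n - order (-1) p"
proof -
  obtain q where q: "p = [:1,1:] ^ order (-1) p * q" "\<not> [:1,1:] dvd q"
    using order_decomp[OF assms(1), of "-1"] by auto
  have q0: "q \<noteq> 0" using q by auto
  have pq: "poly q (-1) \<noteq> 0" using q(2) by (simp add: poly_eq_0_iff_dvd)
  have dp: "degree p = order (-1) p + degree q"
    by (subst q(1)) (simp add: degree_mult_eq degree_power_eq q0)
  have "Tr n p = Tr (n - order (-1) p) q"
    by (subst q(1), rule Tr_pow) (use assms dp in simp)
  also have "degree \<dots> = n - order (-1) p" by (rule Tr_deg) (use assms dp pq in auto)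
  finally show ?thesis .
qed


definition Mset :: "nat set \<Rightarrow> nat \<Rightarrow> (nat \<Rightarrow> nat) set" where
  "Mset F d = {a. (\<forall>i. i \<notin> F \<longrightarrow> a i = 0) \<and> (\<forall>i\<in>F. 0 < a i) \<and> sum a F = d}"

definition Gs :: "int fps" where
  "Gs = Abs_fps (\<lambda>k. if k = 0 then 0 else 1)"

lemma Mset_finite:
  assumes "finite F" shows "finite (Mset F d)"
proof -
  have "Mset F d \<subseteq> {a. \<forall>x. (x \<in> F \<longrightarrow> a x \<in> {0..d}) \<and> (x \<notin> F \<longrightarrow> a x = 0)}"
    unfolding Mset_def using assms by (auto intro: member_le_sum[where f = "\<lambda>i. i" for i, simplified] simp: member_le_sum)
  moreover have "finite {a. \<forall>x. (x \<in> F \<longrightarrow> a x \<in> {0..d}) \<and> (x \<notin> F \<longrightarrow> a x = (0::nat))}"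
    by (rule finite_set_of_finite_funs) (use assms in auto)
  ultimately show ?thesis by (rule finite_subset)
qed


lemma Mset_empty: "Mset {} d = (if d = 0 then {\<lambda>_. 0} else {})"
  unfolding Mset_def by auto

lemma Mset_insert:
  assumes "finite F" "x \<notin> F"
  shows "card (Mset (insert x F) d) = (\<Sum>i<d. card (Mset F i))"
proof -
  have "bij_betw (\<lambda>a. (sum a F, a(x := 0))) (Mset (insert x F) d) (Sigma {..<d} (Mset F))"
  proof (rule bij_betw_byWitness[where f' = "\<lambda>(i, b). b(x := d - i)"])
    show "\<forall>a\<in>Mset (insert x F) d. (\<lambda>(i, b). b(x := d - i)) (sum a F, a(x := 0)) = a"
      using assms unfolding Mset_def by auto
    show "\<forall>a'\<in>Sigma {..<d} (Mset F). (\<lambda>a. (sum a F, a(x := 0))) ((\<lambda>(i, b). b(x := d - i)) a') = a'"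
    proof
      fix a' assume "a' \<in> Sigma {..<d} (Mset F)"
      then obtain i b where a': "a' = (i, b)" "i < d" "b \<in> Mset F i" by auto
      have "sum (b(x := d - i)) F = sum b F" using assms(2) by (intro sum.cong) auto
      then show "(\<lambda>a. (sum a F, a(x := 0))) ((\<lambda>(i, b). b(x := d - i)) a') = a'"
        using a' assms(2) unfolding Mset_def by auto
    qed
    have "(sum a F, a(x := 0)) \<in> Sigma {..<d} (Mset F)" if a: "a \<in> Mset (insert x F) d" for a
    proof -
      have s: "sum (a(x := 0)) F = sum a F" using assms(2) by (intro sum.cong) auto
      have "a x + sum a F = d" using a assms unfolding Mset_def by simp
      moreover have "0 < a x" using a unfolding Mset_def by simp
      ultimately show "(sum a F, a(x := 0)) \<in> Sigma {..<d} (Mset F)"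
        using a s assms(2) unfolding Mset_def by auto
    qed
    then show "(\<lambda>a. (sum a F, a(x := 0))) ` Mset (insert x F) d \<subseteq> Sigma {..<d} (Mset F)"
      by auto
    have "b(x := d - i) \<in> Mset (insert x F) d" if ib: "i < d" "b \<in> Mset F i" for i b
    proof -
      have s: "sum (b(x := d - i)) F = sum b F" using assms(2) by (intro sum.cong) auto
      show "b(x := d - i) \<in> Mset (insert x F) d"
        using ib s assms unfolding Mset_def by auto
    qed
    then show "(\<lambda>(i, b). b(x := d - i)) ` Sigma {..<d} (Mset F) \<subseteq> Mset (insert x F) d"
      by auto
  qed
  then have "card (Mset (insert x F) d) = card (Sigma {..<d} (Mset F))" by (rule bij_betw_same_card)
  also have "\<dots> = (\<Sum>i<d. card (Mset F i))" by (rule card_SigmaI) (use Mset_finite assms in auto)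
  finally show ?thesis .
qed

lemma Mset_fps:
  assumes "finite F"
  shows "Abs_fps (\<lambda>d. int (card (Mset F d))) = Gs ^ card F"
  using assms
proof (induction F rule: finite_induct)
  case empty
  show ?case by (rule fps_ext) (simp add: Mset_empty)
next
  case (insert x F)
  have "Abs_fps (\<lambda>d. int (card (Mset (insert x F) d))) = Abs_fps (\<lambda>d. int (card (Mset F d))) * Gs"
  proof (rule fps_ext)
    fix n
    have "(Abs_fps (\<lambda>d. int (card (Mset F d))) * Gs) $ n = (\<Sum>i=0..n. int (card (Mset F i)) * (if n - i = 0 then 0 else 1))"
      by (simp add: fps_mult_nth Gs_def)
    also have "\<dots> = (\<Sum>i\<in>{..<n}. int (card (Mset F i)))"
      by (rule sum.mono_neutral_cong_right) auto
    finally show "Abs_fps (\<lambda>d. int (card (Mset (insert x F) d))) $ n = (Abs_fps (\<lambda>d. int (card (Mset F d))) * Gs) $ n"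
      using Mset_insert[OF insert(1,2), of n] by simp
  qed
  then show ?case using insert by (simp add: power_Suc2)
qed

lemma Gs_mult: "Gs * (1 - fps_X) = fps_X"
proof (rule fps_ext)
  fix n
  have "Gs * (1 - fps_X) = Gs - fps_X * Gs" by (simp add: algebra_simps)
  then show "(Gs * (1 - fps_X)) $ n = fps_X $ n"
    by (cases n) (auto simp: Gs_def fps_X_mult_nth)
qed


lemma Gs_pow:
  assumes "c \<le> n"
  shows "Gs ^ c * (1 - fps_X) ^ n = fps_X ^ c * (1 - fps_X) ^ (n - c)"
proof -
  have "(1 - fps_X :: int fps) ^ n = (1 - fps_X) ^ c * (1 - fps_X) ^ (n - c)"
    using assms by (simp add: power_add[symmetric])
  then have "Gs ^ c * (1 - fps_X) ^ n = (Gs * (1 - fps_X)) ^ c * (1 - fps_X) ^ (n - c)"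
    by (simp add: power_mult_distrib mult.assoc)
  then show ?thesis by (simp add: Gs_mult)
qed

theorem corollary1p3:
  fixes N :: nat and E :: "nat set set"
  assumes "simple_graph N E"
  shows "a_invariant N E = - int (order (-1) (indep_poly N E))
         \<and> (a_invariant N E = 0 \<longleftrightarrow> poly (indep_poly N E) (-1) \<noteq> 0)"
proof -
  define I where "I = {S. independent N E S}"
  define g where "g i = card {S. independent N E S \<and> card S = i}" for i
  define \<alpha> where "\<alpha> = indep_number N E"
  define P where "P = indep_poly N E"
  have IP: "I \<subseteq> Pow {1..N}" unfolding I_def independent_def by auto
  have finI: "finite I" using IP by (rule finite_subset) simp
  have emp: "{} \<in> I" using assms unfolding I_def independent_def simple_graph_def
    by (auto dest!: bspec)
  have cardN: "card S \<le> N" if "S \<in> I" for S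
    using card_mono[of "{1..N}" S] that IP by auto
  have alpha_ge: "card S \<le> \<alpha>" if "S \<in> I" for S
    unfolding \<alpha>_def indep_number_def using finI that I_def by (auto intro: Max_ge)
  have alpha_le: "\<alpha> \<le> N"
  proof -
    have "\<alpha> \<in> card ` I" unfolding \<alpha>_def indep_number_def I_def[symmetric]
      using finI emp by (intro Max_in) auto
    then show ?thesis using cardN by auto
  qed
  have g_zero: "g i = 0" if "\<alpha> < i" for i
  proof -
    have e: "{S. independent N E S \<and> card S = i} = {}" using alpha_ge that unfolding I_def by fastforce
    show ?thesis unfolding g_def e by simp
  qed
  have coeffP: "coeff P i = int (g i)" for i
  proof -
    have "coeff P i = (if i \<le> N then int (g i) else 0)"
      unfolding P_def indep_poly_def coeff_sum coeff_monom g_def by (simp add: sum.delta)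
    then show ?thesis using g_zero[of i] alpha_le by (auto split: if_splits)
  qed
  have P0: "P \<noteq> 0"
  proof -
    have "{S. independent N E S \<and> card S = 0} \<noteq> {}" using emp unfolding I_def by auto
    moreover have "finite {S. independent N E S \<and> card S = 0}"
      using finI unfolding I_def by (rule finite_subset[rotated]) auto
    ultimately have "g 0 \<noteq> 0" unfolding g_def by simp
    then have "coeff P 0 \<noteq> 0" by (simp add: coeffP)
    then show ?thesis by auto
  qed
  have degP: "degree P \<le> \<alpha>" by (rule degree_le) (simp add: coeffP g_zero)
  have HS: "hilbert_series N E = (\<Sum>F\<in>I. Gs ^ card F)"
  proof (rule fps_ext)
    fix n
    have SM: "standard_monomials N E n = (\<Union>F\<in>I. Mset F n)"
    proof (intro equalityI subsetI)
      fix a assume a: "a \<in> standard_monomials N E n"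
      define F where "F = {i. 0 < a i}"
      have a3: "(\<forall>i. i \<notin> {1..N} \<longrightarrow> a i = 0) \<and> sum a {1..N} = n \<and> (\<forall>e\<in>E. \<not> (\<forall>i\<in>e. 0 < a i))"
        using a unfolding standard_monomials_def mem_Collect_eq .
      have z: "\<forall>i. i \<notin> {1..N} \<longrightarrow> a i = 0" using a3 by (rule conjunct1)
      have sa: "sum a {1..N} = n" using a3 by (rule conjunct2[THEN conjunct1])
      have ed: "\<forall>e\<in>E. \<not> (\<forall>i\<in>e. 0 < a i)" using a3 by (rule conjunct2[THEN conjunct2])
      have F1: "F \<subseteq> {1..N}"
      proof
        fix i assume "i \<in> F"
        then have "a i \<noteq> 0" unfolding F_def by simp
        show "i \<in> {1..N}"
        proof (rule ccontr)
          assume "i \<notin> {1..N}"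
          then have "a i = 0" using z by simp
          then show False using \<open>a i \<noteq> 0\<close> by simp
        qed
      qed
      have "\<not> e \<subseteq> F" if "e \<in> E" for e
      proof
        assume "e \<subseteq> F"
        then have "\<forall>i\<in>e. 0 < a i" unfolding F_def by auto
        then show False using that ed by simp
      qed
      then have "F \<in> I" using F1 unfolding I_def independent_def by auto
      moreover have sF: "sum a F = sum a {1..N}" using F1
        by (intro sum.mono_neutral_left) (auto simp: F_def)
      have "a \<in> Mset F n" unfolding Mset_def
      proof (intro CollectI conjI allI impI ballI)
        show "a i = 0" if "i \<notin> F" for i using that unfolding F_def by simp
        show "0 < a i" if "i \<in> F" for i using that unfolding F_def by simp
        show "sum a F = n" using sF sa by simp
      qed
      ultimately show "a \<in> (\<Union>F\<in>I. Mset F n)" by blast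
    next
      fix a assume "a \<in> (\<Union>F\<in>I. Mset F n)"
      then obtain F where F: "F \<in> I" "a \<in> Mset F n" by auto
      have F1: "F \<subseteq> {1..N}" using F IP by auto
      have "sum a F = sum a {1..N}" using F1 F(2)
        by (intro sum.mono_neutral_left) (auto simp: Mset_def)
      moreover have "\<not> (\<forall>i\<in>e. 0 < a i)" if "e \<in> E" for e
      proof
        assume "\<forall>i\<in>e. 0 < a i"
        have zF: "\<forall>i. i \<notin> F \<longrightarrow> a i = 0" using F(2) unfolding Mset_def by blast
        have "e \<subseteq> F"
        proof
          fix i assume "i \<in> e"
          then have "0 < a i" using \<open>\<forall>i\<in>e. 0 < a i\<close> by blast
          then show "i \<in> F" using zF by (metis less_irrefl)
        qed
        then show False using F(1) that unfolding I_def independent_def by auto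
      qed
      moreover have "\<forall>i. i \<notin> {1..N} \<longrightarrow> a i = 0"
      proof (intro allI impI)
        fix i assume "i \<notin> {1..N}"
        then have "i \<notin> F" using F1 by blast
        then show "a i = 0" using F(2) unfolding Mset_def by blast
      qed
      moreover have "sum a F = n" using F(2) unfolding Mset_def by blast
      ultimately show "a \<in> standard_monomials N E n"
        unfolding standard_monomials_def by simp
    qed
    have "card (standard_monomials N E n) = (\<Sum>F\<in>I. card (Mset F n))"
      unfolding SM
    proof (rule card_UN_disjoint[OF finI])
      show "\<forall>F\<in>I. finite (Mset F n)" using IP by (auto intro!: Mset_finite intro: finite_subset)
      show "\<forall>F\<in>I. \<forall>F'\<in>I. F \<noteq> F' \<longrightarrow> Mset F n \<inter> Mset F' n = {}"
        unfolding Mset_def by fastforce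
    qed
    moreover have "(Gs ^ card F) $ n = int (card (Mset F n))" if "F \<in> I" for F
    proof -
      have "finite F" using that IP by (auto intro: finite_subset)
      from arg_cong[OF Mset_fps[OF this], of "\<lambda>f. f $ n"] show ?thesis by simp
    qed
    ultimately show "hilbert_series N E $ n = (\<Sum>F\<in>I. Gs ^ card F) $ n"
      unfolding hilbert_series_def hilbert_fun_def fps_sum_nth by simp
  qed
  have "hilbert_series N E * (1 - fps_X) ^ \<alpha> = (\<Sum>F\<in>I. fps_X ^ card F * (1 - fps_X) ^ (\<alpha> - card F))"
    unfolding HS sum_distrib_right by (intro sum.cong refl Gs_pow alpha_ge)
  also have "\<dots> = (\<Sum>i\<le>\<alpha>. \<Sum>F\<in>{F\<in>I. card F = i}. fps_X ^ card F * (1 - fps_X) ^ (\<alpha> - card F))"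
    by (rule sum.group[symmetric]) (use finI alpha_ge in auto)
  also have "\<dots> = (\<Sum>i\<le>\<alpha>. of_nat (g i) * (fps_X ^ i * (1 - fps_X) ^ (\<alpha> - i)))"
  proof (intro sum.cong refl)
    fix i
    have "(\<Sum>F\<in>{F\<in>I. card F = i}. fps_X ^ card F * (1 - fps_X) ^ (\<alpha> - card F))
        = (\<Sum>F\<in>{F\<in>I. card F = i}. (fps_X ^ i * (1 - fps_X) ^ (\<alpha> - i) :: int fps))"
      by (intro sum.cong refl) auto
    also have "\<dots> = of_nat (g i) * (fps_X ^ i * (1 - fps_X) ^ (\<alpha> - i))"
      by (simp add: g_def I_def)
    finally show "(\<Sum>F\<in>{F\<in>I. card F = i}. fps_X ^ card F * (1 - fps_X) ^ (\<alpha> - card F))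
        = of_nat (g i) * (fps_X ^ i * (1 - fps_X) ^ (\<alpha> - i) :: int fps)" .
  qed
  also have "\<dots> = fps_of_poly (Tr \<alpha> P)"
    unfolding Tr_def fps_of_poly_sum fps_of_poly_smult fps_of_poly_mult fps_of_poly_power
    by (intro sum.cong refl) (simp add: coeffP fps_of_poly_linear' fps_of_nat)
  finally have heq: "fps_of_poly (Tr \<alpha> P) = hilbert_series N E * (1 - fps_X) ^ indep_number N E"
    unfolding \<alpha>_def by simp
  have hP: "h_poly N E = Tr \<alpha> P"
    unfolding h_poly_def
  proof (rule the_equality)
    show "fps_of_poly (Tr \<alpha> P) = hilbert_series N E * (1 - fps_X) ^ indep_number N E" by (rule heq)
    fix h assume "fps_of_poly h = hilbert_series N E * (1 - fps_X) ^ indep_number N E"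
    then have "fps_of_poly h = fps_of_poly (Tr \<alpha> P)" using heq by simp
    then show "h = Tr \<alpha> P" by (simp only: fps_of_poly_eq_iff)
  qed
  have ord: "order (-1) P \<le> \<alpha>" using order_degree[OF P0, of "-1"] degP by linarith
  have ai: "a_invariant N E = - int (order (-1) P)"
    unfolding a_invariant_def hP Tr_degree[OF P0 degP] \<alpha>_def[symmetric] using ord by simp
  show ?thesis
    unfolding P_def[symmetric] using ai order_eq_0_iff[OF P0] by simp
qed

end
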